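(* Let $c=(h\leftarrow B)$ be a clause, and consider two priority derivation steps $a|K\xrightarrow{c}Q$ (1) and $a\tau\underline{\pi}|(K\tau\underline{\pi}+X)\xrightarrow{c}R$ (2), where $\tau$ is a substitution, $\underline\pi$ a shifting, $X$ a p-goal, and step (2) is a congruent lowering of step (1) by $X$. Then there exist a substitution $\delta$ and a shifting $\underline{\rho}$ such that $R/((a|K)\tau\underline{\pi})=Q\delta\underline{\rho}$; moreover $\delta$ is a renaming if $\tau$ is a renaming.
   Context: A p-atom is a pair $a[p]$ of an atom $a$ and a rational priority $p$. A p-goal is a finite set of p-atoms with pairwise distinct priorities, regarded as a list ordered by increasing priority. Substitutions act on atoms and leave priorities unchanged. A clause is $h\leftarrow B$ with $h$ an atom and $B$ a p-goal. For p-goals with no common priority, $F+G=F\cup G$; $F|G$ denotes $F+G$ when every priority of $F$ is smaller than every priority of $G$. A shifting $\underline{\pi}$ is a strictly increasing bijection $\mathbb{Q}\to\mathbb{Q}$; $G\underline{\pi}$ replaces each priority $p$ of $G$ by $\underline{\pi}(p)$. Priority derivation step: for a p-goal $a|F$ ($a$ of least priority), clause $c=(h\leftarrow B)$, renaming $\xi$ with $var(a|F)\cap var(c\xi)=\emptyset$, idempotent relevant mgu $\theta$ of $a$ and $h\xi$, and shifting $\underline{\pi}$ with $F$, $B\xi\underline{\pi}$ sharing no priority, $a|F\xrightarrow{c\xi,\theta}(F+B\xi\underline{\pi})\theta$. Lowering: given steps $a|K\xrightarrow{c}(K+B\xi'\underline{\theta}')\alpha'$ and $a\lambda\underline{\sigma}|(K\lambda\underline{\sigma}+X)\xrightarrow{c}(X+K\lambda\underline{\sigma}+B\xi''\underline{\theta}'')\alpha''$,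 the second is a lowering of the first by $X$; it is a congruent lowering by $X$ if some shifting $\underline{\rho}$ satisfies $K\underline{\rho}=K\underline{\sigma}$ and $B\underline{\theta}'\underline{\rho}=B\underline{\theta}''$. Sub-resolvent of a step: for a step $a|(F+G)\xrightarrow{c}Q=((F+G)+B\xi\underline{\pi})\alpha$, $Q/a=B\xi\underline{\pi}\alpha$, $Q/F=F\alpha$, and $Q/(a|F)=Q/a+Q/F$ (the p-atoms of $Q$ descending from $a|F$). In the claim, $R/((a|K)\tau\underline\pi)$ is thus the resolvent $R$ without the instantiated atoms of $X$. *)

theory Defs
  imports Complex_Main
begin

text \<open>Atoms are represented as first-order terms (a predicate symbol applied to
argument terms); function and predicate symbols share the type 'f.\<close>

datatype ('f, 'v) trm = Var 'v | Fn 'f "('f, 'v) trm list"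

type_synonym ('f, 'v) subst = "'v \<Rightarrow> ('f, 'v) trm"

fun subst_apply :: "('f, 'v) trm \<Rightarrow> ('f, 'v) subst \<Rightarrow> ('f, 'v) trm" (infixl "\<cdot>" 67) where
  "Var x \<cdot> \<sigma> = \<sigma> x"
| "Fn f ts \<cdot> \<sigma> = Fn f (map (\<lambda>t. t \<cdot> \<sigma>) ts)"

fun vars :: "('f, 'v) trm \<Rightarrow> 'v set" where
  "vars (Var x) = {x}"
| "vars (Fn f ts) = \<Union> (set (map vars ts))"

definition subst_comp :: "('f, 'v) subst \<Rightarrow> ('f, 'v) subst \<Rightarrow> ('f, 'v) subst" (infixl "\<circ>\<^sub>s" 75) where
  "\<sigma> \<circ>\<^sub>s \<theta> = (\<lambda>x. \<sigma> x \<cdot> \<theta>)"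

definition is_renaming :: "('f, 'v) subst \<Rightarrow> bool" where
  "is_renaming \<sigma> \<longleftrightarrow> (\<exists>f. bij f \<and> \<sigma> = (\<lambda>x. Var (f x)))"

definition subst_dom :: "('f, 'v) subst \<Rightarrow> 'v set" where
  "subst_dom \<sigma> = {x. \<sigma> x \<noteq> Var x}"

definition subst_range_vars :: "('f, 'v) subst \<Rightarrow> 'v set" where
  "subst_range_vars \<sigma> = (\<Union>x\<in>subst_dom \<sigma>. vars (\<sigma> x))"

definition unifier :: "('f, 'v) subst \<Rightarrow> ('f, 'v) trm \<Rightarrow> ('f, 'v) trm \<Rightarrow> bool" where
  "unifier \<sigma> s t \<longleftrightarrow> s \<cdot> \<sigma> = t \<cdot> \<sigma>"

definition is_mgu :: "('f, 'v) subst \<Rightarrow> ('f, 'v) trm \<Rightarrow> ('f, 'v) trm \<Rightarrow> bool" where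
  "is_mgu \<theta> s t \<longleftrightarrow> unifier \<theta> s t \<and> (\<forall>\<sigma>. unifier \<sigma> s t \<longrightarrow> (\<exists>\<gamma>. \<sigma> = \<theta> \<circ>\<^sub>s \<gamma>))"

definition idempotent :: "('f, 'v) subst \<Rightarrow> bool" where
  "idempotent \<theta> \<longleftrightarrow> \<theta> \<circ>\<^sub>s \<theta> = \<theta>"

definition relevant :: "('f, 'v) subst \<Rightarrow> ('f, 'v) trm \<Rightarrow> ('f, 'v) trm \<Rightarrow> bool" where
  "relevant \<theta> s t \<longleftrightarrow> subst_dom \<theta> \<union> subst_range_vars \<theta> \<subseteq> vars s \<union> vars t"

type_synonym ('f, 'v) patom = "('f, 'v) trm \<times> rat"
type_synonym ('f, 'v) pgoal = "('f, 'v) patom set"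
type_synonym ('f, 'v) clause = "('f, 'v) trm \<times> ('f, 'v) pgoal"

definition prios :: "('f, 'v) pgoal \<Rightarrow> rat set" where
  "prios G = snd ` G"

definition is_pgoal :: "('f, 'v) pgoal \<Rightarrow> bool" where
  "is_pgoal G \<longleftrightarrow> finite G \<and> inj_on snd G"

definition pg_subst :: "('f, 'v) subst \<Rightarrow> ('f, 'v) pgoal \<Rightarrow> ('f, 'v) pgoal" where
  "pg_subst \<sigma> G = (\<lambda>(a, p). (a \<cdot> \<sigma>, p)) ` G"

definition pg_shift :: "(rat \<Rightarrow> rat) \<Rightarrow> ('f, 'v) pgoal \<Rightarrow> ('f, 'v) pgoal" where
  "pg_shift \<pi> G = (\<lambda>(a, p). (a, \<pi> p)) ` G"

definition pg_vars :: "('f, 'v) pgoal \<Rightarrow> 'v set" where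
  "pg_vars G = (\<Union>ap\<in>G. vars (fst ap))"

definition shifting :: "(rat \<Rightarrow> rat) \<Rightarrow> bool" where
  "shifting \<pi> \<longleftrightarrow> strict_mono \<pi> \<and> bij \<pi>"

definition clause_subst :: "('f, 'v) subst \<Rightarrow> ('f, 'v) clause \<Rightarrow> ('f, 'v) clause" where
  "clause_subst \<xi> c = (fst c \<cdot> \<xi>, pg_subst \<xi> (snd c))"

definition clause_vars :: "('f, 'v) clause \<Rightarrow> 'v set" where
  "clause_vars c = vars (fst c) \<union> pg_vars (snd c)"

text \<open>pstep a p F c xi theta pi Q:  the p-goal a|F, where (a,p) is the p-atom of
least priority and F the rest, resolves with clause c (renamed by xi), using the
idempotent relevant mgu theta and the shifting pi, to the resolvent Q.\<close>
definition pstep ::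
  "('f, 'v) trm \<Rightarrow> rat \<Rightarrow> ('f, 'v) pgoal \<Rightarrow> ('f, 'v) clause \<Rightarrow> ('f, 'v) subst \<Rightarrow>
   ('f, 'v) subst \<Rightarrow> (rat \<Rightarrow> rat) \<Rightarrow> ('f, 'v) pgoal \<Rightarrow> bool" where
  "pstep a p F c \<xi> \<theta> \<pi> Q \<longleftrightarrow>
     is_pgoal F \<and> (\<forall>q\<in>prios F. p < q) \<and> is_pgoal (snd c) \<and>
     is_renaming \<xi> \<and>
     (vars a \<union> pg_vars F) \<inter> clause_vars (clause_subst \<xi> c) = {} \<and>
     idempotent \<theta> \<and> relevant \<theta> a (fst c \<cdot> \<xi>) \<and> is_mgu \<theta> a (fst c \<cdot> \<xi>) \<and>
     shifting \<pi> \<and> prios F \<inter> prios (pg_shift \<pi> (pg_subst \<xi> (snd c))) = {} \<and>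
     Q = pg_subst \<theta> (F \<union> pg_shift \<pi> (pg_subst \<xi> (snd c)))"

text \<open>Sub-resolvent Q/(a|F') = Q/a + Q/F' of a step with renaming xi, shifting pi,
mgu theta, for F' a part of the non-selected p-atoms.\<close>
definition subres ::
  "('f, 'v) clause \<Rightarrow> ('f, 'v) subst \<Rightarrow> (rat \<Rightarrow> rat) \<Rightarrow> ('f, 'v) subst \<Rightarrow>
   ('f, 'v) pgoal \<Rightarrow> ('f, 'v) pgoal" where
  "subres c \<xi> \<pi> \<theta> F' = pg_subst \<theta> (pg_shift \<pi> (pg_subst \<xi> (snd c))) \<union> pg_subst \<theta> F'"

text \<open>The step  a lam sigma | (K lam sigma + X) -> R  (with xi2, theta2, pi2) is a
lowering by X of the step  a|K -> Q  (with xi1, theta1, pi1).\<close>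
definition lowering where
  "lowering a p K c \<xi>1 \<theta>1 \<pi>1 Q lam \<sigma> X \<xi>2 \<theta>2 \<pi>2 R \<longleftrightarrow>
     pstep a p K c \<xi>1 \<theta>1 \<pi>1 Q \<and> shifting \<sigma> \<and> is_pgoal X \<and>
     prios (pg_shift \<sigma> (pg_subst lam K)) \<inter> prios X = {} \<and>
     pstep (a \<cdot> lam) (\<sigma> p) (pg_shift \<sigma> (pg_subst lam K) \<union> X) c \<xi>2 \<theta>2 \<pi>2 R"

definition congruent_lowering where
  "congruent_lowering a p K c \<xi>1 \<theta>1 \<pi>1 Q lam \<sigma> X \<xi>2 \<theta>2 \<pi>2 R \<longleftrightarrow>
     lowering a p K c \<xi>1 \<theta>1 \<pi>1 Q lam \<sigma> X \<xi>2 \<theta>2 \<pi>2 R \<and>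
     (\<exists>\<rho>. shifting \<rho> \<and> pg_shift \<rho> K = pg_shift \<sigma> K \<and>
          pg_shift \<rho> (pg_shift \<pi>1 (snd c)) = pg_shift \<pi>2 (snd c))"

end

theory Submission imports Defs begin

lemma subst_apply_comp: "t \<cdot> (\<sigma> \<circ>\<^sub>s \<theta>) = t \<cdot> \<sigma> \<cdot> \<theta>"
  by (induction t) (auto simp: subst_comp_def)

lemma subst_comp_assoc: "(\<sigma> \<circ>\<^sub>s \<theta>) \<circ>\<^sub>s \<gamma> = \<sigma> \<circ>\<^sub>s (\<theta> \<circ>\<^sub>s \<gamma>)"
  by (simp add: subst_comp_def fun_eq_iff subst_apply_comp[unfolded subst_comp_def])

lemma subst_cong: "(\<And>x. x \<in> vars t \<Longrightarrow> \<sigma> x = \<theta> x) \<Longrightarrow> t \<cdot> \<sigma> = t \<cdot> \<theta>"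
  by (induction t) auto

lemma vars_subst: "vars (t \<cdot> \<sigma>) = (\<Union>x\<in>vars t. vars (\<sigma> x))"
  by (induction t) auto

lemma subst_Var[simp]: "t \<cdot> Var = t"
  by (induction t) (auto simp: map_idI)

lemma subst_fix: "t \<cdot> \<sigma> = t \<Longrightarrow> x \<in> vars t \<Longrightarrow> \<sigma> x = Var x"
proof (induction t)
  case (Var y) then show ?case by auto
next
  case (Fn f ts)
  then obtain u where u: "u \<in> set ts" "x \<in> vars u" by auto
  from Fn.prems(1) have "map (\<lambda>t. t \<cdot> \<sigma>) ts = ts" by simp
  then have "u \<cdot> \<sigma> = u" using u(1) by (simp add: map_eq_conv[of _ ts id, simplified])
  then show ?case using Fn.IH u by blast
qed

lemma pg_shift_subst: "pg_shift r (pg_subst s A) = pg_subst s (pg_shift r A)"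
  unfolding pg_shift_def pg_subst_def image_image by (simp add: case_prod_beta)

lemma pg_subst_comp: "pg_subst s (pg_subst t A) = pg_subst (t \<circ>\<^sub>s s) A"
  unfolding pg_subst_def image_image by (simp add: case_prod_beta subst_apply_comp)

lemma pg_shift_comp: "pg_shift r (pg_shift q A) = pg_shift (r \<circ> q) A"
  unfolding pg_shift_def image_image by (simp add: case_prod_beta)

lemma pg_subst_Un: "pg_subst s (A \<union> B) = pg_subst s A \<union> pg_subst s B"
  unfolding pg_subst_def by (rule image_Un)

lemma pg_shift_Un: "pg_shift s (A \<union> B) = pg_shift s A \<union> pg_shift s B"
  unfolding pg_shift_def by (rule image_Un)

lemma pg_subst_cong: "(\<And>b q. (b, q) \<in> A \<Longrightarrow> b \<cdot> s = b \<cdot> s') \<Longrightarrow> pg_subst s A = pg_subst s' A"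
  unfolding pg_subst_def by (rule image_cong) auto

lemma pg_shift_mem: "(b, q) \<in> pg_shift r A \<Longrightarrow> \<exists>q'. (b, q') \<in> A"
  unfolding pg_shift_def by auto

lemma pg_vars_subst: "pg_vars (pg_subst s A) = (\<Union>x\<in>pg_vars A. vars (s x))"
  unfolding pg_vars_def pg_subst_def
  apply (auto simp: vars_subst)
  apply (rule_tac x="(a,b)" in bexI)
  by (auto simp: vars_subst)

lemma pg_vars_shift: "pg_vars (pg_shift r A) = pg_vars A"
  unfolding pg_vars_def pg_shift_def by (auto simp: case_prod_beta)

lemma clause_vars_subst: "clause_vars (clause_subst s c) = (\<Union>x\<in>clause_vars c. vars (s x))"
  unfolding clause_vars_def clause_subst_def by (simp add: vars_subst pg_vars_subst)

lemma finite_vars: "finite (vars t)"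
  by (induction t) auto

lemma finite_pg_vars: "finite A \<Longrightarrow> finite (pg_vars A)"
  unfolding pg_vars_def by (auto simp: finite_vars)

lemma extend_inj: fixes g :: "'a \<Rightarrow> 'a" shows "finite V \<Longrightarrow> inj_on g V \<Longrightarrow> \<exists>f. bij f \<and> (\<forall>x\<in>V. f x = g x)"
proof (induction V rule: finite_induct)
  case empty
  then show ?case using bij_id by blast
next
  case (insert x V)
  then obtain f where f: "bij f" "\<forall>v\<in>V. f v = g v" by (auto simp: inj_on_insert)
  define sw where "sw = (\<lambda>z. if z = f x then g x else if z = g x then f x else z)"
  have "sw \<circ> sw = id" unfolding sw_def by (auto simp: fun_eq_iff)
  then have "bij sw" by (metis o_bij)
  then have b: "bij (sw \<circ> f)" using f(1) by (rule bij_comp[rotated])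
  have "\<forall>v\<in>insert x V. (sw \<circ> f) v = g v"
  proof
    fix v assume v: "v \<in> insert x V"
    show "(sw \<circ> f) v = g v"
    proof (cases "v = x")
      case True then show ?thesis by (simp add: sw_def)
    next
      case False
      then have vV: "v \<in> V" using v by auto
      have "f v \<noteq> f x" using False f(1) by (metis bij_is_inj inj_eq)
      moreover have "g v \<noteq> g x" using False insert.prems v by (meson inj_onD insertI1)
      ultimately show ?thesis using f(2) vV by (simp add: sw_def)
    qed
  qed
  with b show ?case by blast
qed

lemma renaming_vars: "\<sigma> = (\<lambda>x. Var (f x)) \<Longrightarrow> vars (t \<cdot> \<sigma>) = f ` vars t"
  by (auto simp: vars_subst)

lemma Var_comp: "Var \<circ>\<^sub>s \<sigma> = \<sigma>"
  by (simp add: subst_comp_def)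

lemma comp_apply: "(\<sigma> \<circ>\<^sub>s \<theta>) x = \<sigma> x \<cdot> \<theta>"
  by (simp add: subst_comp_def)

lemma core_renaming:
  fixes \<alpha>1 \<alpha>2 :: "('f, 'v) subst"
  assumes fin: "finite V"
    and mgu1: "is_mgu \<alpha>1 s1 t1" and mgu2: "is_mgu \<alpha>2 s2 t2"
    and f: "bij f" and zeta_s: "s1 \<cdot> (\<lambda>x. Var (f x)) = s2" and zeta_t: "t1 \<cdot> (\<lambda>x. Var (f x)) = t2"
  shows "\<exists>\<delta>. is_renaming \<delta> \<and> (\<forall>x\<in>V. \<alpha>1 x \<cdot> \<delta> = Var (f x) \<cdot> \<alpha>2)"
proof -
  define \<zeta> :: "('f, 'v) subst" where "\<zeta> = (\<lambda>x. Var (f x))"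
  define \<zeta>' :: "('f, 'v) subst" where "\<zeta>' = (\<lambda>x. Var (inv f x))"
  have zz: "\<zeta> \<circ>\<^sub>s \<zeta>' = Var"
    using f by (auto simp: fun_eq_iff subst_comp_def \<zeta>_def \<zeta>'_def bij_is_inj)
  have u2: "s2 \<cdot> \<alpha>2 = t2 \<cdot> \<alpha>2" using mgu2 by (simp add: is_mgu_def unifier_def)
  have u1: "s1 \<cdot> \<alpha>1 = t1 \<cdot> \<alpha>1" using mgu1 by (simp add: is_mgu_def unifier_def)
  have "unifier (\<zeta> \<circ>\<^sub>s \<alpha>2) s1 t1"
    using u2 zeta_s zeta_t by (simp add: unifier_def subst_apply_comp \<zeta>_def)
  then obtain \<gamma>2 where g2: "\<zeta> \<circ>\<^sub>s \<alpha>2 = \<alpha>1 \<circ>\<^sub>s \<gamma>2" using mgu1 by (auto simp: is_mgu_def)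
  have "s2 \<cdot> (\<zeta>' \<circ>\<^sub>s \<alpha>1) = s1 \<cdot> \<zeta> \<cdot> (\<zeta>' \<circ>\<^sub>s \<alpha>1)"
    using zeta_s by (simp add: \<zeta>_def)
  also have "\<dots> = s1 \<cdot> ((\<zeta> \<circ>\<^sub>s \<zeta>') \<circ>\<^sub>s \<alpha>1)" by (simp add: subst_apply_comp)
  also have "\<dots> = s1 \<cdot> \<alpha>1" by (simp add: zz Var_comp)
  finally have es: "s2 \<cdot> (\<zeta>' \<circ>\<^sub>s \<alpha>1) = s1 \<cdot> \<alpha>1" .
  have "t2 \<cdot> (\<zeta>' \<circ>\<^sub>s \<alpha>1) = t1 \<cdot> \<zeta> \<cdot> (\<zeta>' \<circ>\<^sub>s \<alpha>1)"
    using zeta_t by (simp add: \<zeta>_def)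
  also have "\<dots> = t1 \<cdot> ((\<zeta> \<circ>\<^sub>s \<zeta>') \<circ>\<^sub>s \<alpha>1)" by (simp add: subst_apply_comp)
  also have "\<dots> = t1 \<cdot> \<alpha>1" by (simp add: zz Var_comp)
  finally have et: "t2 \<cdot> (\<zeta>' \<circ>\<^sub>s \<alpha>1) = t1 \<cdot> \<alpha>1" .
  have "unifier (\<zeta>' \<circ>\<^sub>s \<alpha>1) s2 t2" using u1 es et by (simp add: unifier_def)
  then obtain \<gamma>1 where g1: "\<zeta>' \<circ>\<^sub>s \<alpha>1 = \<alpha>2 \<circ>\<^sub>s \<gamma>1" using mgu2 by (auto simp: is_mgu_def)
  have a1: "\<alpha>1 = \<alpha>1 \<circ>\<^sub>s (\<gamma>2 \<circ>\<^sub>s \<gamma>1)"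
  proof -
    have "\<alpha>1 = (\<zeta> \<circ>\<^sub>s \<zeta>') \<circ>\<^sub>s \<alpha>1" by (simp add: zz Var_comp)
    also have "\<dots> = \<zeta> \<circ>\<^sub>s (\<alpha>2 \<circ>\<^sub>s \<gamma>1)" by (simp add: subst_comp_assoc g1)
    also have "\<dots> = \<alpha>1 \<circ>\<^sub>s (\<gamma>2 \<circ>\<^sub>s \<gamma>1)" by (simp add: subst_comp_assoc[symmetric] g2)
    finally show ?thesis .
  qed
  define W where "W = (\<Union>x\<in>V. vars (\<alpha>1 x))"
  have finW: "finite W" using fin by (simp add: W_def finite_vars)
  define k where "k = (\<lambda>y. case \<gamma>2 y of Var z \<Rightarrow> z | Fn _ _ \<Rightarrow> y)"
  have kW: "\<gamma>2 y = Var (k y) \<and> \<gamma>1 (k y) = Var y" if "y \<in> W" for y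
  proof -
    from that obtain x where x: "y \<in> vars (\<alpha>1 x)" by (auto simp: W_def)
    have "\<alpha>1 x \<cdot> (\<gamma>2 \<circ>\<^sub>s \<gamma>1) = \<alpha>1 x" using a1 by (metis comp_apply)
    from subst_fix[OF this x] have e: "\<gamma>2 y \<cdot> \<gamma>1 = Var y" by (simp add: comp_apply)
    then show ?thesis
      by (cases "\<gamma>2 y") (auto simp: k_def)
  qed
  have "inj_on k W"
  proof (rule inj_onI)
    fix y y' assume "y \<in> W" "y' \<in> W" "k y = k y'"
    then show "y = y'" using kW by (metis trm.inject(1))
  qed
  from extend_inj[OF finW this] obtain fd where fd: "bij fd" "\<forall>y\<in>W. fd y = k y" by blast
  define \<delta> :: "('f, 'v) subst" where "\<delta> = (\<lambda>x. Var (fd x))"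
  have "is_renaming \<delta>" using fd(1) by (auto simp: is_renaming_def \<delta>_def)
  moreover have "\<alpha>1 x \<cdot> \<delta> = Var (f x) \<cdot> \<alpha>2" if "x \<in> V" for x
  proof -
    have "\<alpha>1 x \<cdot> \<delta> = \<alpha>1 x \<cdot> \<gamma>2"
    proof (rule subst_cong)
      fix y assume "y \<in> vars (\<alpha>1 x)"
      then have "y \<in> W" using that by (auto simp: W_def)
      then show "\<delta> y = \<gamma>2 y" using kW fd(2) by (simp add: \<delta>_def)
    qed
    also have "\<dots> = (\<zeta> \<circ>\<^sub>s \<alpha>2) x" by (simp add: g2 comp_apply)
    finally show ?thesis by (simp add: comp_apply \<zeta>_def)
  qed
  ultimately show ?thesis by blast
qed

theorem mainTheorem5:
  fixes a :: "('f, 'v) trm" and p :: rat and K X Q R :: "('f, 'v) pgoal"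
    and c :: "('f, 'v) clause" and \<tau> \<xi>1 \<alpha>1 \<xi>2 \<alpha>2 :: "('f, 'v) subst"
    and \<pi> \<pi>1 \<pi>2 :: "rat \<Rightarrow> rat"
  assumes "infinite (UNIV :: 'v set)"
    and "congruent_lowering a p K c \<xi>1 \<alpha>1 \<pi>1 Q \<tau> \<pi> X \<xi>2 \<alpha>2 \<pi>2 R"
  shows "\<exists>\<delta> \<rho>. shifting \<rho> \<and>
           subres c \<xi>2 \<pi>2 \<alpha>2 (pg_shift \<pi> (pg_subst \<tau> K)) = pg_shift \<rho> (pg_subst \<delta> Q) \<and>
           (is_renaming \<tau> \<longrightarrow> is_renaming \<delta>)"
proof -
  obtain h B where c: "c = (h, B)" by (cases c)
  from assms(2) obtain \<rho> where
      st1: "pstep a p K c \<xi>1 \<alpha>1 \<pi>1 Q" and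
      st2: "pstep (a \<cdot> \<tau>) (\<pi> p) (pg_shift \<pi> (pg_subst \<tau> K) \<union> X) c \<xi>2 \<alpha>2 \<pi>2 R" and
      rho: "shifting \<rho>" "pg_shift \<rho> K = pg_shift \<pi> K"
        "pg_shift \<rho> (pg_shift \<pi>1 (snd c)) = pg_shift \<pi>2 (snd c)"
    unfolding congruent_lowering_def lowering_def by blast
  from st1 have finK: "finite K" and finB: "finite B" and ren1: "is_renaming \<xi>1"
    and disj1: "(vars a \<union> pg_vars K) \<inter> clause_vars (clause_subst \<xi>1 c) = {}"
    and mgu1: "is_mgu \<alpha>1 a (h \<cdot> \<xi>1)"
    and Q: "Q = pg_subst \<alpha>1 (K \<union> pg_shift \<pi>1 (pg_subst \<xi>1 B))"
    unfolding pstep_def is_pgoal_def by (auto simp: c)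
  from st2 have ren2: "is_renaming \<xi>2"
    and disj2: "(vars (a \<cdot> \<tau>) \<union> pg_vars (pg_shift \<pi> (pg_subst \<tau> K) \<union> X)) \<inter> clause_vars (clause_subst \<xi>2 c) = {}"
    and mgu2: "is_mgu \<alpha>2 (a \<cdot> \<tau>) (h \<cdot> \<xi>2)"
    unfolding pstep_def by (auto simp: c)
  obtain f1 where f1: "bij f1" "\<xi>1 = (\<lambda>x. Var (f1 x))" using ren1 by (auto simp: is_renaming_def)
  obtain f2 where f2: "bij f2" "\<xi>2 = (\<lambda>x. Var (f2 x))" using ren2 by (auto simp: is_renaming_def)
  define V1 where "V1 = vars a \<union> pg_vars K"
  define CV where "CV = clause_vars c"
  have V2: "clause_vars (clause_subst \<xi>1 c) = f1 ` CV" by (auto simp: clause_vars_subst f1 CV_def)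
  have CV2: "clause_vars (clause_subst \<xi>2 c) = f2 ` CV" by (auto simp: clause_vars_subst f2 CV_def)
  define V where "V = V1 \<union> f1 ` CV"
  have finV: "finite V" unfolding V_def V1_def CV_def clause_vars_def using finK finB
    by (simp add: finite_vars finite_pg_vars c)
  have dis1: "V1 \<inter> f1 ` CV = {}" using disj1 V2 by (simp add: V1_def)
  define \<eta> :: "('f,'v) subst" where "\<eta> = (\<lambda>x. if x \<in> V1 then \<tau> x else Var (f2 (inv f1 x)))"
  have eta1: "\<eta> x = \<tau> x" if "x \<in> V1" for x using that by (simp add: \<eta>_def)
  have f1V1: "f1 y \<notin> V1" if "y \<in> CV" for y using that dis1 by auto
  have eta2: "\<eta> (f1 y) = Var (f2 y)" if "y \<in> CV" for y
    using f1V1[OF that] f1(1) by (simp add: \<eta>_def bij_is_inj)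
  have clause_eta: "t \<cdot> \<xi>1 \<cdot> \<eta> = t \<cdot> \<xi>2" if "vars t \<subseteq> CV" for t
  proof -
    have "t \<cdot> \<xi>1 \<cdot> \<eta> = t \<cdot> (\<xi>1 \<circ>\<^sub>s \<eta>)" by (simp add: subst_apply_comp)
    also have "\<dots> = t \<cdot> \<xi>2"
      by (rule subst_cong) (use that eta2 in \<open>auto simp: comp_apply f1 f2\<close>)
    finally show ?thesis .
  qed
  have hCV: "vars h \<subseteq> CV" by (simp add: CV_def clause_vars_def c)
  have bCV: "vars b \<subseteq> CV" if "(b, q) \<in> B" for b q using that
    by (auto simp: CV_def clause_vars_def c pg_vars_def)
  have aV1: "vars a \<subseteq> V1" by (simp add: V1_def)
  have kV1: "vars b \<subseteq> V1" if "(b, q) \<in> K" for b q using that by (auto simp: V1_def pg_vars_def)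
  have a_eta: "a \<cdot> \<eta> = a \<cdot> \<tau>" by (rule subst_cong) (use aV1 eta1 in auto)
  have xiV: "vars (t \<cdot> \<xi>1) \<subseteq> V" if "vars t \<subseteq> CV" for t
    using that by (auto simp: renaming_vars[OF f1(2)] V_def)
  have core: "\<exists>\<delta>. (\<forall>x\<in>V. \<alpha>1 x \<cdot> \<delta> = \<eta> x \<cdot> \<alpha>2) \<and> (is_renaming \<tau> \<longrightarrow> is_renaming \<delta>)"
  proof (cases "is_renaming \<tau>")
    case False
    have "unifier (\<eta> \<circ>\<^sub>s \<alpha>2) a (h \<cdot> \<xi>1)"
      using mgu2 a_eta clause_eta[OF hCV] by (simp add: unifier_def is_mgu_def subst_apply_comp)
    then obtain \<gamma> where "\<eta> \<circ>\<^sub>s \<alpha>2 = \<alpha>1 \<circ>\<^sub>s \<gamma>" using mgu1 by (auto simp: is_mgu_def)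
    then have "\<forall>x\<in>V. \<alpha>1 x \<cdot> \<gamma> = \<eta> x \<cdot> \<alpha>2" by (metis comp_apply)
    then show ?thesis using False by blast
  next
    case True
    then obtain ft where ft: "bij ft" "\<tau> = (\<lambda>x. Var (ft x))" by (auto simp: is_renaming_def)
    define g where "g = (\<lambda>x. if x \<in> V1 then ft x else f2 (inv f1 x))"
    have eta_g: "\<eta> = (\<lambda>x. Var (g x))" by (auto simp: \<eta>_def g_def ft fun_eq_iff)
    have img1: "ft ` V1 \<inter> f2 ` CV = {}"
    proof -
      have "ft ` V1 \<subseteq> vars (a \<cdot> \<tau>) \<union> pg_vars (pg_shift \<pi> (pg_subst \<tau> K) \<union> X)"
      proof -
        have e1: "pg_vars (pg_shift \<pi> (pg_subst \<tau> K)) = ft ` pg_vars K"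
          by (auto simp: pg_vars_shift pg_vars_subst ft)
        have e2: "vars (a \<cdot> \<tau>) = ft ` vars a" by (simp add: renaming_vars[OF ft(2)])
        have e3: "pg_vars (pg_shift \<pi> (pg_subst \<tau> K)) \<subseteq> pg_vars (pg_shift \<pi> (pg_subst \<tau> K) \<union> X)"
          by (auto simp: pg_vars_def)
        show ?thesis using e1 e2 e3 by (auto simp: V1_def)
      qed
      then show ?thesis using disj2 CV2 by blast
    qed
    have gV2: "g (f1 z) = f2 z" if "z \<in> CV" for z
      using f1V1[OF that] f1(1) by (simp add: g_def bij_is_inj)
    have "inj_on g V"
    proof (rule inj_onI)
      fix x y assume x: "x \<in> V" and y: "y \<in> V" and e: "g x = g y"
      show "x = y"
      proof (cases "x \<in> V1")
        case xT: True
        show ?thesis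
        proof (cases "y \<in> V1")
          case True
          then show ?thesis using xT e ft(1) by (simp add: g_def bij_is_inj inj_eq)
        next
          case False
          then obtain y' where y': "y' \<in> CV" "y = f1 y'" using y by (auto simp: V_def)
          then have "g y \<in> f2 ` CV" using gV2 by auto
          moreover have "g x \<in> ft ` V1" using xT by (simp add: g_def)
          ultimately show ?thesis using e img1 by auto
        qed
      next
        case xF: False
        then obtain x' where x': "x' \<in> CV" "x = f1 x'" using x by (auto simp: V_def)
        show ?thesis
        proof (cases "y \<in> V1")
          case True
          have "g x \<in> f2 ` CV" using gV2 x' by auto
          moreover have "g y \<in> ft ` V1" using True by (simp add: g_def)
          ultimately show ?thesis using e img1 by auto
        next
          case False
          then obtain y' where y': "y' \<in> CV" "y = f1 y'" using y by (auto simp: V_def)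
          then show ?thesis using x' e gV2 f2(1) by (simp add: bij_is_inj inj_eq)
        qed
      qed
    qed
    from extend_inj[OF finV this] obtain f where f: "bij f" "\<forall>x\<in>V. f x = g x" by blast
    have fV: "t \<cdot> (\<lambda>x. Var (f x)) = t \<cdot> \<eta>" if "vars t \<subseteq> V" for t
      by (rule subst_cong) (use that f(2) eta_g in auto)
    have s: "a \<cdot> (\<lambda>x. Var (f x)) = a \<cdot> \<tau>" using fV[of a] aV1 a_eta by (auto simp: V_def)
    have t: "h \<cdot> \<xi>1 \<cdot> (\<lambda>x. Var (f x)) = h \<cdot> \<xi>2" using fV[OF xiV[OF hCV]] clause_eta[OF hCV] by simp
    from core_renaming[OF finV mgu1 mgu2 f(1) s t] obtain \<delta> where
      "is_renaming \<delta>" "\<forall>x\<in>V. \<alpha>1 x \<cdot> \<delta> = Var (f x) \<cdot> \<alpha>2" by blast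
    then show ?thesis using f(2) eta_g by auto
  qed
  then obtain \<delta> where d: "\<forall>x\<in>V. \<alpha>1 x \<cdot> \<delta> = \<eta> x \<cdot> \<alpha>2" "is_renaming \<tau> \<longrightarrow> is_renaming \<delta>" by blast
  have key: "t \<cdot> \<alpha>1 \<cdot> \<delta> = t \<cdot> \<eta> \<cdot> \<alpha>2" if "vars t \<subseteq> V" for t
  proof -
    have "t \<cdot> \<alpha>1 \<cdot> \<delta> = t \<cdot> (\<alpha>1 \<circ>\<^sub>s \<delta>)" by (simp add: subst_apply_comp)
    also have "\<dots> = t \<cdot> (\<eta> \<circ>\<^sub>s \<alpha>2)" by (rule subst_cong) (use that d(1) in \<open>auto simp: comp_apply\<close>)
    finally show ?thesis by (simp add: subst_apply_comp)
  qed
  have P1: "pg_subst \<alpha>2 (pg_shift \<pi> (pg_subst \<tau> K)) = pg_shift \<rho> (pg_subst \<delta> (pg_subst \<alpha>1 K))"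
  proof -
    have "pg_shift \<rho> (pg_subst \<delta> (pg_subst \<alpha>1 K)) = pg_subst (\<alpha>1 \<circ>\<^sub>s \<delta>) (pg_shift \<pi> K)"
      by (simp add: pg_shift_subst pg_subst_comp rho(2))
    also have "\<dots> = pg_subst (\<tau> \<circ>\<^sub>s \<alpha>2) (pg_shift \<pi> K)"
    proof (rule pg_subst_cong)
      fix b q assume "(b, q) \<in> pg_shift \<pi> K"
      then obtain q' where "(b, q') \<in> K" using pg_shift_mem by blast
      then have bV: "vars b \<subseteq> V1" using kV1 by blast
      have "b \<cdot> \<eta> = b \<cdot> \<tau>" by (rule subst_cong) (use bV eta1 in auto)
      then show "b \<cdot> (\<alpha>1 \<circ>\<^sub>s \<delta>) = b \<cdot> (\<tau> \<circ>\<^sub>s \<alpha>2)"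
        using key[of b] bV by (auto simp: subst_apply_comp V_def)
    qed
    finally show ?thesis by (simp add: pg_shift_subst pg_subst_comp)
  qed
  have P2: "pg_subst \<alpha>2 (pg_shift \<pi>2 (pg_subst \<xi>2 B)) =
      pg_shift \<rho> (pg_subst \<delta> (pg_subst \<alpha>1 (pg_shift \<pi>1 (pg_subst \<xi>1 B))))"
  proof -
    have "pg_shift \<rho> (pg_subst \<delta> (pg_subst \<alpha>1 (pg_shift \<pi>1 (pg_subst \<xi>1 B))))
        = pg_subst (\<xi>1 \<circ>\<^sub>s (\<alpha>1 \<circ>\<^sub>s \<delta>)) (pg_shift \<rho> (pg_shift \<pi>1 B))"
      by (simp add: pg_shift_subst pg_subst_comp subst_comp_assoc)
    also have "\<dots> = pg_subst (\<xi>1 \<circ>\<^sub>s (\<alpha>1 \<circ>\<^sub>s \<delta>)) (pg_shift \<pi>2 B)" using rho(3) by (simp add: c)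
    also have "\<dots> = pg_subst (\<xi>2 \<circ>\<^sub>s \<alpha>2) (pg_shift \<pi>2 B)"
    proof (rule pg_subst_cong)
      fix b q assume "(b, q) \<in> pg_shift \<pi>2 B"
      then obtain q' where "(b, q') \<in> B" using pg_shift_mem by blast
      then have bV: "vars b \<subseteq> CV" using bCV by blast
      show "b \<cdot> (\<xi>1 \<circ>\<^sub>s (\<alpha>1 \<circ>\<^sub>s \<delta>)) = b \<cdot> (\<xi>2 \<circ>\<^sub>s \<alpha>2)"
        using key[OF xiV[OF bV]] clause_eta[OF bV] by (simp add: subst_apply_comp)
    qed
    finally show ?thesis by (simp add: pg_shift_subst pg_subst_comp subst_comp_assoc)
  qed
  have "subres c \<xi>2 \<pi>2 \<alpha>2 (pg_shift \<pi> (pg_subst \<tau> K)) = pg_shift \<rho> (pg_subst \<delta> Q)"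
    unfolding subres_def Q pg_subst_Un pg_shift_Un using P1 P2 by (simp add: c Un_commute)
  then show ?thesis using rho(1) d(2) by blast
qed

end
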